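(* Let $L\ge 2$ and $N$ be integers with $2\le N\le L$, let $U>\frac{8}{L}$, and let $\phi\in\mathbb{R}$ with $0\le\phi<\frac{2\pi}{L}$. Consider the Lieb–Wu equations with one down-spin, i.e. the system \[ e^{\sqrt{-1}\,k_iL}=\frac{\lambda-\sin(k_i+\phi)-\sqrt{-1}\,U/4}{\lambda-\sin(k_i+\phi)+\sqrt{-1}\,U/4}\quad(i=1,\dots,N),\qquad \prod_{i=1}^{N}\frac{\lambda-\sin(k_i+\phi)-\sqrt{-1}\,U/4}{\lambda-\sin(k_i+\phi)+\sqrt{-1}\,U/4}=1, \] in the unknowns $k_1,\dots,k_N,\lambda$. Then these equations have $\binom{L}{N}(N-1)$ real solutions.
   Context: A real solution is a solution in which $\lambda\in\mathbb{R}$ and all $k_1,\dots,k_N$ are real numbers taken modulo $2\pi$ (in $[0,2\pi)$) that are pairwise distinct; solutions are counted as unordered sets $\{k_1,\dots,k_N\}$ together with $\lambda$. *)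

theory Defs
  imports Complex_Main
begin

definition lw_factor :: "real \<Rightarrow> real \<Rightarrow> real \<Rightarrow> real \<Rightarrow> complex" where
  "lw_factor U phi lam k =
     (complex_of_real (lam - sin (k + phi)) - \<i> * complex_of_real (U / 4)) /
     (complex_of_real (lam - sin (k + phi)) + \<i> * complex_of_real (U / 4))"

text \<open>Real solutions of the Lieb-Wu equations with one down-spin: an unordered set K of
  N pairwise distinct quasi-momenta in [0, 2 pi) together with a real rapidity lam.\<close>
definition lw_real_solutions :: "nat \<Rightarrow> nat \<Rightarrow> real \<Rightarrow> real \<Rightarrow> (real set \<times> real) set" where
  "lw_real_solutions L N U phi =
     {(K, lam). finite K \<and> card K = N \<and> K \<subseteq> {0..<2 * pi} \<and>
        (\<forall>k\<in>K. exp (\<i> * complex_of_real (k * real L)) = lw_factor U phi lam k) \<and>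
        (\<Prod>k\<in>K. lw_factor U phi lam k) = 1}"

end

theory Submission
  imports Defs "HOL-Analysis.Complex_Transcendental"
begin

lemma lw_eq_iff:
  fixes u a th :: real
  assumes u: "u > 0"
  shows "exp (\<i> * complex_of_real th) =
           (complex_of_real a - \<i> * complex_of_real u) / (complex_of_real a + \<i> * complex_of_real u)
         \<longleftrightarrow> sin (th/2) \<noteq> 0 \<and> a = - u * cos (th/2) / sin (th/2)"
proof -
  define h where "h = th/2"
  have th: "th = 2*h" by (simp add: h_def)
  have nz: "complex_of_real a + \<i> * complex_of_real u \<noteq> 0"
    using u by (auto simp: complex_eq_iff)
  have e: "exp (\<i> * complex_of_real th) = Complex (cos th) (sin th)"
    by (simp add: exp_Euler cos_of_real sin_of_real complex_eq_iff)
  have "exp (\<i> * complex_of_real th) =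
           (complex_of_real a - \<i> * complex_of_real u) / (complex_of_real a + \<i> * complex_of_real u)
       \<longleftrightarrow> exp (\<i> * complex_of_real th) * (complex_of_real a + \<i> * complex_of_real u) = complex_of_real a - \<i> * complex_of_real u"
    using nz by (simp add: eq_divide_eq)
  also have "\<dots> \<longleftrightarrow> a * cos th - u * sin th = a \<and> a * sin th + u * cos th = - u"
    unfolding e by (simp add: complex_eq_iff mult.commute add.commute)
  also have "\<dots> \<longleftrightarrow> sin h * (a * sin h + u * cos h) = 0 \<and> cos h * (a * sin h + u * cos h) = 0"
  proof -
    have c1: "cos h ^ 2 - sin h ^ 2 = 1 - 2 * sin h ^ 2" "cos h ^ 2 - sin h ^ 2 = 2 * cos h ^ 2 - 1"
      using sin_cos_squared_add[of h] by linarith+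
    have "a * cos th - u * sin th = a \<longleftrightarrow> -2 * (sin h * (a * sin h + u * cos h)) = 0"
      unfolding th sin_double cos_double c1(1) by (auto simp: algebra_simps power2_eq_square)
    moreover have "a * sin th + u * cos th = - u \<longleftrightarrow> 2 * (cos h * (a * sin h + u * cos h)) = 0"
      unfolding th sin_double cos_double c1(2) by (auto simp: algebra_simps power2_eq_square)
    ultimately show ?thesis by simp
  qed
  also have "\<dots> \<longleftrightarrow> a * sin h + u * cos h = 0"
    using sin_cos_squared_add[of h] by (auto simp: power2_eq_square)
  also have "\<dots> \<longleftrightarrow> sin h \<noteq> 0 \<and> a = - u * cos h / sin h"
  proof
    assume E: "a * sin h + u * cos h = 0"
    have "sin h \<noteq> 0"
    proof
      assume "sin h = 0"
      then have "cos h \<noteq> 0" using sin_cos_squared_add[of h] by auto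
      with E \<open>sin h = 0\<close> u show False by simp
    qed
    then show "sin h \<noteq> 0 \<and> a = - u * cos h / sin h" using E by (simp add: field_simps)
  qed (auto simp: field_simps)
  finally show ?thesis by (simp add: h_def)
qed


lemma cot_deriv:
  fixes k L :: real
  assumes s: "sin (k * L / 2) \<noteq> 0"
  shows "DERIV (\<lambda>k. cos (k * L / 2) / sin (k * L / 2)) k :> - (L/2) / (sin (k * L / 2))^2"
proof -
  have di: "DERIV (\<lambda>k. k * L / 2) k :> L / 2"
    using DERIV_cmult_right[OF DERIV_ident, of "L/2" k] by (simp add: mult.commute)
  have ds: "DERIV (\<lambda>k. sin (k * L / 2)) k :> cos (k * L / 2) * (L / 2)"
    using DERIV_chain2[OF DERIV_sin di] by simp
  have dc: "DERIV (\<lambda>k. cos (k * L / 2)) k :> - sin (k * L / 2) * (L / 2)"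
    using DERIV_chain2[OF DERIV_cos di] by simp
  have "DERIV (\<lambda>k. cos (k * L / 2) / sin (k * L / 2)) k :>
     ((- sin (k * L / 2) * (L / 2)) * sin (k * L / 2) - cos (k * L / 2) * (cos (k * L / 2) * (L / 2))) / (sin (k * L / 2) * sin (k * L / 2))"
    by (rule DERIV_divide[OF dc ds s])
  moreover have "((- sin (k * L / 2) * (L / 2)) * sin (k * L / 2) - cos (k * L / 2) * (cos (k * L / 2) * (L / 2))) = - (L / 2)"
  proof -
    have "(- sin (k * L / 2) * (L / 2)) * sin (k * L / 2) - cos (k * L / 2) * (cos (k * L / 2) * (L / 2))
       = - (L/2) * ((sin (k * L / 2))^2 + (cos (k * L / 2))^2)" unfolding power2_eq_square by algebra
    then show ?thesis by simp
  qed
  ultimately show ?thesis by (simp add: power2_eq_square)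
qed

locale lwc =
  fixes L :: nat and U phi :: real
  assumes L1: "L \<ge> 1" and UL: "U * real L > 8"
begin

lemma Lpos: "real L > 0" using L1 by simp
lemma Upos: "U > 0" using UL Lpos by (smt (verit) mult_nonpos_nonneg)
lemma uL: "U / 4 * real L > 2" using UL by simp

definition Lam :: "real \<Rightarrow> real" where
  "Lam k = sin (k + phi) - U / 4 * (cos (k * real L / 2) / sin (k * real L / 2))"

definition lo :: "nat \<Rightarrow> real" where "lo j = 2 * pi * real j / real L"

definition Jset :: "nat \<Rightarrow> real set" where "Jset j = {lo j <..< lo (Suc j)}"

lemma lo_Suc: "lo (Suc j) = lo j + 2 * pi / real L"
  unfolding lo_def using Lpos by (simp add: field_simps)

lemma Jset_half: "k \<in> Jset j \<longleftrightarrow> real j * pi < k * real L / 2 \<and> k * real L / 2 < real (Suc j) * pi"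
  unfolding Jset_def lo_def using Lpos by (auto simp: field_simps)

lemma J_sin: assumes "k \<in> Jset j" shows "sin (k * real L / 2) \<noteq> 0"
proof
  assume "sin (k * real L / 2) = 0"
  then obtain i :: int where i: "k * real L / 2 = of_int i * pi" by (auto simp: sin_zero_iff_int2)
  from assms[unfolded Jset_half] i have "real j < of_int i" "of_int i < real j + 1"
    by (auto simp: mult_less_cancel_right)
  then have "real_of_int (int j) < real_of_int i" "real_of_int i < real_of_int (int j + 1)" by simp_all
  then have "int j < i" "i < int j + 1" by (simp_all only: of_int_less_iff)
  then show False by linarith
qed

lemma Lam_deriv: assumes "k \<in> Jset j"
  shows "DERIV Lam k :> (cos (k + phi) + U / 4 * (real L / 2) / (sin (k * real L / 2))^2)"
proof -
  have s: "sin (k * real L / 2) \<noteq> 0" using J_sin[OF assms] .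
  have d: "DERIV (\<lambda>k. cos (k * real L / 2) / sin (k * real L / 2)) k :> - (real L/2) / (sin (k * real L / 2))^2"
    by (rule cot_deriv[OF s])
  have d0: "DERIV (\<lambda>k. sin (k + phi)) k :> cos (k + phi)"
  proof -
    have "DERIV (\<lambda>k. k + phi) k :> 1 + 0" by (rule DERIV_add[OF DERIV_ident DERIV_const])
    from DERIV_chain2[OF DERIV_sin this] show ?thesis by simp
  qed
  have d2: "DERIV (\<lambda>k. sin (k + phi) - U / 4 * (cos (k * real L / 2) / sin (k * real L / 2))) k :>
     cos (k + phi) - U / 4 * (- (real L / 2) / (sin (k * real L / 2))^2)"
    by (rule DERIV_diff[OF d0 DERIV_cmult[OF d]])
  have e: "cos (k + phi) - U / 4 * (- (real L / 2) / (sin (k * real L / 2))^2) = cos (k + phi) + U / 4 * (real L / 2) / (sin (k * real L / 2))^2"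
    by simp
  show ?thesis unfolding Lam_def[abs_def] using d2 unfolding e .
qed

lemma Lam_deriv_pos: "cos (k + phi) + U / 4 * (real L / 2) / (sin (k * real L / 2))^2 > 0"
  if "k \<in> Jset j" for k j
proof -
  have s: "(sin (k * real L / 2))^2 > 0" using J_sin[OF that] by simp
  have s1: "(sin (k * real L / 2))^2 \<le> 1" by (simp add: abs_square_le_1)
  have "U / 4 * (real L / 2) \<le> U / 4 * (real L / 2) / (sin (k * real L / 2))^2"
    using s s1 Upos Lpos by (simp add: le_divide_eq)
  moreover have "U / 4 * (real L / 2) > 1" using uL by simp
  moreover have "cos (k + phi) \<ge> -1" by simp
  ultimately show ?thesis by linarith
qed

lemma Lam_mono: assumes "k1 \<in> Jset j" "k2 \<in> Jset j" "k1 < k2" shows "Lam k1 < Lam k2"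
proof (rule DERIV_pos_imp_increasing[OF assms(3)])
  fix x assume "k1 \<le> x" "x \<le> k2"
  then have "x \<in> Jset j" using assms unfolding Jset_def by auto
  then show "\<exists>y. DERIV Lam x :> y \<and> y > 0" using Lam_deriv Lam_deriv_pos by blast
qed

lemma Lam_cont: "k \<in> Jset j \<Longrightarrow> isCont Lam k"
  using Lam_deriv DERIV_isCont by blast

lemma Lam_inj: "k1 \<in> Jset j \<Longrightarrow> k2 \<in> Jset j \<Longrightarrow> Lam k1 = Lam k2 \<Longrightarrow> k1 = k2"
  using Lam_mono by (metis less_irrefl linorder_neqE_linordered_idom)

lemma cot_shift:
  assumes "sin x \<noteq> 0"
  shows "cos (real j * pi + x) / sin (real j * pi + x) = cos x / sin x"
    and "cos (real (Suc j) * pi - x) / sin (real (Suc j) * pi - x) = - (cos x / sin x)"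
proof -
  have p: "((-1::real) ^ j) \<noteq> 0" by simp
  show "cos (real j * pi + x) / sin (real j * pi + x) = cos x / sin x"
    by (simp add: cos_add sin_add)
  have p2: "((-1::real) ^ Suc j) \<noteq> 0" by simp
  show "cos (real (Suc j) * pi - x) / sin (real (Suc j) * pi - x) = - (cos x / sin x)"
    unfolding cos_diff sin_diff sin_npi cos_npi using p2
    by (simp del: of_nat_Suc power_Suc)
qed

lemma Lam_ex: "\<exists>k\<in>Jset j. Lam k = y"
proof -
  define M where "M = (\<bar>y\<bar> + 2) / (U / 4)"
  have Mpos: "M > 0" using Upos by (simp add: M_def)
  have uM: "U / 4 * M = \<bar>y\<bar> + 2" using Upos by (simp add: M_def)
  define x0 where "x0 = arctan (1 / M)"
  have x0: "0 < x0" "x0 < pi / 2" using Mpos arctan_ubound[of "1/M"] by (auto simp: x0_def)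
  have sx0: "sin x0 \<noteq> 0" using x0 sin_gt_zero[of x0] by auto
  have cx0: "cos x0 / sin x0 = M"
  proof -
    have "tan x0 = 1 / M" by (simp add: x0_def tan_arctan)
    then show ?thesis using Mpos sx0 by (simp add: tan_def divide_simps mult.commute split: if_splits)
  qed
  define a where "a = lo j + 2 * x0 / real L"
  define b where "b = lo (Suc j) - 2 * x0 / real L"
  have aL: "a * real L / 2 = real j * pi + x0" unfolding a_def lo_def using Lpos by (simp add: field_simps)
  have bL: "b * real L / 2 = real (Suc j) * pi - x0" unfolding b_def lo_def using Lpos
    by (simp add: field_simps del: of_nat_Suc)
  have aJ: "a \<in> Jset j" unfolding Jset_half aL using x0 by (simp add: algebra_simps)
  have bJ: "b \<in> Jset j" unfolding Jset_half bL using x0 by (simp add: algebra_simps)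
  have "a * real L / 2 < b * real L / 2" unfolding aL bL using x0 by (simp add: algebra_simps)
  then have ab: "a < b" using Lpos by (simp add: divide_less_cancel mult_less_cancel_right)
  have La: "Lam a = sin (a + phi) - (\<bar>y\<bar> + 2)"
    unfolding Lam_def aL cot_shift(1)[OF sx0] cx0 uM ..
  have Lb: "Lam b = sin (b + phi) + (\<bar>y\<bar> + 2)"
    unfolding Lam_def bL cot_shift(2)[OF sx0] cx0 using uM by simp
  have "Lam a \<le> y" "y \<le> Lam b" unfolding La Lb using sin_le_one[of "a+phi"] sin_ge_minus_one[of "b+phi"]
    by linarith+
  moreover have "continuous_on {a..b} Lam"
    apply (rule continuous_at_imp_continuous_on)
  proof
    fix x assume "x \<in> {a..b}"
    then have "x \<in> Jset j" using aJ bJ unfolding Jset_def by auto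
    then show "isCont Lam x" by (rule Lam_cont)
  qed
  ultimately obtain k where "a \<le> k" "k \<le> b" "Lam k = y" using IVT'[of Lam a y b] ab by auto
  moreover have "k \<in> Jset j" using aJ bJ \<open>a \<le> k\<close> \<open>k \<le> b\<close> unfolding Jset_def by auto
  ultimately show ?thesis by blast
qed

definition kf :: "nat \<Rightarrow> real \<Rightarrow> real" where
  "kf j y = (THE k. k \<in> Jset j \<and> Lam k = y)"

lemma kf: "kf j y \<in> Jset j" "Lam (kf j y) = y"
proof -
  have "\<exists>!k. k \<in> Jset j \<and> Lam k = y" using Lam_ex[of j y] Lam_inj by blast
  then have "kf j y \<in> Jset j \<and> Lam (kf j y) = y" unfolding kf_def by (rule theI')
  then show "kf j y \<in> Jset j" "Lam (kf j y) = y" by auto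
qed

lemma kf_unique: "k \<in> Jset j \<Longrightarrow> Lam k = y \<Longrightarrow> kf j y = k"
  using kf Lam_inj by blast

lemma kf_mono: assumes "y1 < y2" shows "kf j y1 < kf j y2"
proof (rule ccontr)
  assume "\<not> kf j y1 < kf j y2"
  then have "kf j y2 \<le> kf j y1" by simp
  have "Lam (kf j y2) \<le> Lam (kf j y1)"
  proof (cases "kf j y2 = kf j y1")
    case True then show ?thesis by simp
  next
    case False
    then have "kf j y2 < kf j y1" using \<open>kf j y2 \<le> kf j y1\<close> by simp
    then show ?thesis using Lam_mono[OF kf(1) kf(1)] by (simp add: less_imp_le)
  qed
  with assms show False unfolding kf(2) by simp
qed

lemma kf_le: assumes "Lam p \<ge> y" "p \<in> Jset j" shows "kf j y \<le> p"
proof (rule ccontr)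
  assume "\<not> kf j y \<le> p"
  then have "Lam p < Lam (kf j y)" using Lam_mono[OF assms(2) kf(1)] by simp
  then show False using assms(1) kf(2) by simp
qed

lemma kf_ge: assumes "Lam p \<le> y" "p \<in> Jset j" shows "p \<le> kf j y"
proof (rule ccontr)
  assume "\<not> p \<le> kf j y"
  then have "Lam (kf j y) < Lam p" using Lam_mono[OF kf(1) assms(2)] by simp
  then show False using assms(1) kf(2) by simp
qed

lemma kf_cont: "isCont (kf j) y"
proof -
  define x where "x = kf j y"
  have xJ: "x \<in> Jset j" using kf x_def by simp
  define a where "a = (lo j + x) / 2"
  define b where "b = (x + lo (Suc j)) / 2"
  have sub: "z \<in> Jset j" if "a \<le> z" "z \<le> b" for z using xJ that unfolding Jset_def a_def b_def by auto
  have "isCont (kf j) (Lam x)"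
  proof (rule isCont_inverse_function2[of a x b])
    show "a < x" "x < b" using xJ unfolding a_def b_def Jset_def by auto
    show "kf j (Lam z) = z" if "a \<le> z" "z \<le> b" for z using kf_unique[OF sub[OF that]] by simp
    show "isCont Lam z" if "a \<le> z" "z \<le> b" for z using Lam_cont[OF sub[OF that]] .
  qed
  then show ?thesis unfolding x_def kf(2) .
qed

definition F :: "nat set \<Rightarrow> real \<Rightarrow> real" where
  "F S y = (\<Sum>j\<in>S. kf j y)"

lemma F_mono: "finite S \<Longrightarrow> S \<noteq> {} \<Longrightarrow> y1 < y2 \<Longrightarrow> F S y1 < F S y2"
  unfolding F_def by (rule sum_strict_mono) (auto intro: kf_mono)

lemma F_inj: "finite S \<Longrightarrow> S \<noteq> {} \<Longrightarrow> F S y1 = F S y2 \<Longrightarrow> y1 = y2"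
  using F_mono by (metis less_irrefl linorder_neqE_linordered_idom)

lemma F_cont: "continuous_on A (F S)"
  unfolding F_def
  by (rule continuous_at_imp_continuous_on) (auto intro!: isCont_sum kf_cont)

lemma F_bounds: "finite S \<Longrightarrow> S \<noteq> {} \<Longrightarrow> (\<Sum>j\<in>S. lo j) < F S y \<and> F S y < (\<Sum>j\<in>S. lo (Suc j))"
  unfolding F_def using kf(1) unfolding Jset_def
  by (auto intro!: sum_strict_mono)

lemma F_surj:
  assumes S: "finite S" "S \<noteq> {}"
    and c: "(\<Sum>j\<in>S. lo j) < c" "c < (\<Sum>j\<in>S. lo (Suc j))"
  shows "\<exists>y. F S y = c"
proof -
  define n where "n = real (card S)"
  have n: "n > 0" using S by (simp add: n_def card_gt_0_iff)
  define d where "d = min (min ((c - (\<Sum>j\<in>S. lo j)) / (2 * n)) (((\<Sum>j\<in>S. lo (Suc j)) - c) / (2 * n))) (pi / real L)"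
  have d0: "d > 0" using c n Lpos by (simp add: d_def)
  have d1: "n * d \<le> (c - (\<Sum>j\<in>S. lo j)) / 2" "n * d \<le> ((\<Sum>j\<in>S. lo (Suc j)) - c) / 2"
  proof -
    have "d \<le> (c - (\<Sum>j\<in>S. lo j)) / (2 * n)" "d \<le> ((\<Sum>j\<in>S. lo (Suc j)) - c) / (2 * n)"
      unfolding d_def by auto
    then have "d * (2 * n) \<le> c - (\<Sum>j\<in>S. lo j)" "d * (2 * n) \<le> (\<Sum>j\<in>S. lo (Suc j)) - c"
      using n by (simp_all only: pos_le_divide_eq[of "2 * n"] mult_pos_pos zero_less_numeral)
    then show "n * d \<le> (c - (\<Sum>j\<in>S. lo j)) / 2" "n * d \<le> ((\<Sum>j\<in>S. lo (Suc j)) - c) / 2"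
      by (simp_all add: algebra_simps)
  qed
  have "pi / real L < 2 * pi / real L" using Lpos by (simp add: divide_strict_right_mono)
  moreover have "d \<le> pi / real L" unfolding d_def by simp
  ultimately have d2: "d < 2 * pi / real L" by linarith
  have pJ: "lo j + d \<in> Jset j" for j using d0 d2 unfolding Jset_def lo_Suc by auto
  have qJ: "lo (Suc j) - d \<in> Jset j" for j using d0 d2 unfolding Jset_def lo_Suc by auto
  define y1 where "y1 = Min ((\<lambda>j. Lam (lo j + d)) ` S)"
  define y2 where "y2 = Max ((\<lambda>j. Lam (lo (Suc j) - d)) ` S)"
  have "F S y1 \<le> (\<Sum>j\<in>S. lo j + d)"
    unfolding F_def
  proof (rule sum_mono)
    fix j assume "j \<in> S"
    then have "y1 \<le> Lam (lo j + d)" unfolding y1_def using S by simp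
    then show "kf j y1 \<le> lo j + d" using kf_le pJ by blast
  qed
  also have "\<dots> = (\<Sum>j\<in>S. lo j) + n * d" by (simp add: sum.distrib n_def)
  finally have F1: "F S y1 < c" using d1 c by argo
  have "(\<Sum>j\<in>S. lo (Suc j) - d) \<le> F S y2"
    unfolding F_def
  proof (rule sum_mono)
    fix j assume "j \<in> S"
    then have "Lam (lo (Suc j) - d) \<le> y2" unfolding y2_def using S by simp
    then show "lo (Suc j) - d \<le> kf j y2" using kf_ge qJ by blast
  qed
  moreover have "(\<Sum>j\<in>S. lo (Suc j) - d) = (\<Sum>j\<in>S. lo (Suc j)) - n * d" by (simp add: sum_subtractf n_def)
  ultimately have F2: "c < F S y2" using d1 c by argo
  have "y1 \<le> y2"
  proof (rule ccontr)
    assume "\<not> y1 \<le> y2"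
    then have "F S y2 < F S y1" using F_mono[OF S] by simp
    with F1 F2 show False by simp
  qed
  then obtain y where "F S y = c" using IVT'[of "F S" y1 c y2] F1 F2 F_cont by force
  then show ?thesis ..
qed

lemma factor_iff:
  "exp (\<i> * complex_of_real (k * real L)) = lw_factor U phi y k \<longleftrightarrow> sin (k * real L / 2) \<noteq> 0 \<and> y = Lam k"
proof -
  have u: "U / 4 > 0" using Upos by simp
  have "exp (\<i> * complex_of_real (k * real L)) = lw_factor U phi y k \<longleftrightarrow>
     sin (k * real L / 2) \<noteq> 0 \<and> y - sin (k + phi) = - (U / 4) * cos (k * real L / 2) / sin (k * real L / 2)"
    unfolding lw_factor_def by (rule lw_eq_iff[OF u])
  also have "\<dots> \<longleftrightarrow> sin (k * real L / 2) \<noteq> 0 \<and> y = Lam k"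
    unfolding Lam_def by (auto simp: algebra_simps)
  finally show ?thesis .
qed

lemma lo_mono: "i \<le> j \<Longrightarrow> lo i \<le> lo j"
  unfolding lo_def using Lpos by (simp add: divide_right_mono)

lemma Jset_disj: assumes "k \<in> Jset i" "k \<in> Jset j" shows "i = j"
proof (rule ccontr)
  assume "i \<noteq> j"
  then consider "Suc i \<le> j" | "Suc j \<le> i" by linarith
  then show False
  proof cases
    case 1 then have "lo (Suc i) \<le> lo j" by (rule lo_mono)
    then show False using assms unfolding Jset_def by auto
  next
    case 2 then have "lo (Suc j) \<le> lo i" by (rule lo_mono)
    then show False using assms unfolding Jset_def by auto
  qed
qed

lemma Jset_sub: assumes "j < L" shows "Jset j \<subseteq> {0..<2*pi}"
proof -
  have "lo 0 \<le> lo j" "lo (Suc j) \<le> lo L" using assms by (auto intro: lo_mono)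
  moreover have "lo 0 = 0" "lo L = 2 * pi" unfolding lo_def using Lpos by auto
  ultimately show ?thesis unfolding Jset_def by auto
qed

lemma in_some_J:
  assumes "k \<in> {0..<2*pi}" "sin (k * real L / 2) \<noteq> 0"
  shows "\<exists>j<L. k \<in> Jset j"
proof -
  define t where "t = k * real L / (2 * pi)"
  have t0: "t \<ge> 0" using assms Lpos by (simp add: t_def)
  have tL: "t < real L" using assms Lpos by (simp add: t_def field_simps)
  define j where "j = nat \<lfloor>t\<rfloor>"
  have jt: "real j \<le> t" "t < real j + 1" using t0 unfolding j_def by (simp_all add: of_nat_nat)
  have jL: "j < L" using jt tL by linarith
  have k_eq: "k = 2 * pi * t / real L" using Lpos by (simp add: t_def)
  have "lo j \<le> k" unfolding lo_def k_eq using jt Lpos by (simp add: divide_right_mono)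
  moreover have "lo j \<noteq> k"
  proof
    assume "lo j = k"
    then have "k * real L / 2 = real j * pi" unfolding lo_def using Lpos by (auto simp: field_simps)
    with assms(2) show False by simp
  qed
  moreover have "k < lo (Suc j)" unfolding lo_def k_eq using jt Lpos by (simp add: divide_strict_right_mono)
  ultimately have "k \<in> Jset j" unfolding Jset_def by auto
  with jL show ?thesis by blast
qed

lemma sum_lo: "(\<Sum>j\<in>S. lo j) = 2 * pi * real (\<Sum>j\<in>S. j) / real L"
  unfolding lo_def by (simp add: sum_divide_distrib[symmetric] sum_distrib_left[symmetric])

lemma sum_lo_Suc: "(\<Sum>j\<in>S. lo (Suc j)) = 2 * pi * (real (\<Sum>j\<in>S. j) + real (card S)) / real L"
  unfolding lo_Suc sum.distrib sum_lo by (simp add: add_divide_distrib distrib_left)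

definition Sol where "Sol N = lw_real_solutions L N U phi"

lemma Sol_iff:
  "(K, y) \<in> Sol N \<longleftrightarrow> finite K \<and> card K = N \<and> K \<subseteq> {0..<2*pi} \<and>
      (\<forall>k\<in>K. sin (k * real L / 2) \<noteq> 0 \<and> y = Lam k) \<and> (\<exists>n::int. real L * (\<Sum>k\<in>K. k) = 2 * pi * of_int n)"
proof -
  have prod: "(\<Prod>k\<in>K. lw_factor U phi y k) = 1 \<longleftrightarrow> (\<exists>n::int. real L * (\<Sum>k\<in>K. k) = 2 * pi * of_int n)"
    if fin: "finite K" and eq: "\<forall>k\<in>K. exp (\<i> * complex_of_real (k * real L)) = lw_factor U phi y k"
  proof -
    have "(\<Prod>k\<in>K. lw_factor U phi y k) = (\<Prod>k\<in>K. exp (\<i> * complex_of_real (k * real L)))"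
      using eq by simp
    also have "\<dots> = exp (\<Sum>k\<in>K. \<i> * complex_of_real (k * real L))" using fin by (simp add: exp_sum)
    also have "(\<Sum>k\<in>K. \<i> * complex_of_real (k * real L)) = \<i> * complex_of_real (real L * (\<Sum>k\<in>K. k))"
      by (simp add: sum_distrib_left sum_distrib_right mult.commute)
    finally have P: "(\<Prod>k\<in>K. lw_factor U phi y k) = exp (\<i> * complex_of_real (real L * (\<Sum>k\<in>K. k)))" .
    have X: "exp (\<i> * complex_of_real x) = 1 \<longleftrightarrow> (\<exists>n::int. x = 2 * pi * of_int n)" for x
      unfolding exp_eq_1 by (auto simp: mult.commute mult.left_commute)
    show ?thesis unfolding P by (rule X)
  qed
  show ?thesis
    unfolding Sol_def lw_real_solutions_def using prod factor_iff by auto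
qed

definition cS :: "nat set \<Rightarrow> nat \<Rightarrow> real" where
  "cS S m = 2 * pi * (real (\<Sum>j\<in>S. j) + real m) / real L"

definition lamS :: "nat set \<Rightarrow> nat \<Rightarrow> real" where
  "lamS S m = (THE y. F S y = cS S m)"

definition Phi :: "nat set \<times> nat \<Rightarrow> real set \<times> real" where
  "Phi p = ((\<lambda>j. kf j (lamS (fst p) (snd p))) ` fst p, lamS (fst p) (snd p))"

definition T :: "nat \<Rightarrow> (nat set \<times> nat) set" where
  "T N = Sigma {S. S \<subseteq> {..<L} \<and> card S = N} (\<lambda>_. {1..N-1})"

lemma lamS: assumes "finite S" "S \<noteq> {}" "1 \<le> m" "m < card S"
  shows "F S (lamS S m) = cS S m"
proof -
  have "(\<Sum>j\<in>S. lo j) < cS S m" "cS S m < (\<Sum>j\<in>S. lo (Suc j))"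
  proof -
    have "2 * pi * real (\<Sum>j\<in>S. j) < 2 * pi * (real (\<Sum>j\<in>S. j) + real m)" using assms(3) by simp
    then show "(\<Sum>j\<in>S. lo j) < cS S m" unfolding sum_lo cS_def by (rule divide_strict_right_mono[OF _ Lpos])
    have "2 * pi * (real (\<Sum>j\<in>S. j) + real m) < 2 * pi * (real (\<Sum>j\<in>S. j) + real (card S))" using assms(4) by simp
    then show "cS S m < (\<Sum>j\<in>S. lo (Suc j))" unfolding sum_lo_Suc cS_def by (rule divide_strict_right_mono[OF _ Lpos])
  qed
  then obtain y where y: "F S y = cS S m" using F_surj[OF assms(1,2)] by blast
  have "\<exists>!y. F S y = cS S m"
  proof (rule ex1I[of _ y])
    show "F S y = cS S m" by (rule y)
    show "y' = y" if "F S y' = cS S m" for y' using F_inj[OF assms(1,2)] that y by simp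
  qed
  then show ?thesis unfolding lamS_def by (rule theI')
qed

lemma kf_inj: "inj_on (\<lambda>j. kf j y) S"
proof (rule inj_onI)
  fix i j assume "i \<in> S" "j \<in> S" "kf i y = kf j y"
  then have "kf i y \<in> Jset j" using kf(1)[of j y] by simp
  then show "i = j" using kf(1)[of i y] Jset_disj by blast
qed

lemma sum_K: "(\<Sum>k\<in>(\<lambda>j. kf j y) ` S. k) = F S y"
  unfolding F_def by (simp add: sum.reindex[OF kf_inj])

lemma Lcancel: "real L * (2 * pi * x / real L) = 2 * pi * x"
  using Lpos by simp

lemma T_in_Sol: assumes N: "1 \<le> N" and p: "p \<in> T N" shows "Phi p \<in> Sol N"
proof -
  obtain S m where pe: "p = (S, m)" by (cases p)
  have S: "S \<subseteq> {..<L}" "card S = N" and m: "1 \<le> m" "m \<le> N - 1" using p unfolding T_def pe by auto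
  have fS: "finite S" using S(1) finite_subset by blast
  have neS: "S \<noteq> {}" using S(2) N by auto
  define y where "y = lamS S m"
  have Fy: "F S y = cS S m" unfolding y_def by (rule lamS[OF fS neS m(1)]) (use m S N in simp)
  define K where "K = (\<lambda>j. kf j y) ` S"
  have PhiK: "Phi p = (K, y)" unfolding Phi_def pe K_def y_def by simp
  have "finite K" unfolding K_def using fS by simp
  moreover have "card K = N" unfolding K_def using S(2) by (simp add: card_image[OF kf_inj])
  moreover have "K \<subseteq> {0..<2*pi}"
  proof
    fix k assume "k \<in> K"
    then obtain j where j: "j \<in> S" "k = kf j y" unfolding K_def by blast
    then have "j < L" using S(1) by auto
    then show "k \<in> {0..<2*pi}" using Jset_sub kf(1)[of j y] j by blast
  qed
  moreover have "\<forall>k\<in>K. sin (k * real L / 2) \<noteq> 0 \<and> y = Lam k"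
    unfolding K_def using J_sin kf by auto
  moreover have "real L * (\<Sum>k\<in>K. k) = 2 * pi * of_int (int ((\<Sum>j\<in>S. j) + m))"
    unfolding K_def sum_K Fy cS_def Lcancel by simp
  ultimately show ?thesis unfolding PhiK Sol_iff by blast
qed

lemma Phi_inj: assumes N: "1 \<le> N" shows "inj_on Phi (T N)"
proof (rule inj_onI)
  fix p q assume p: "p \<in> T N" and q: "q \<in> T N" and eq: "Phi p = Phi q"
  obtain S m where pe: "p = (S, m)" by (cases p)
  obtain S' m' where qe: "q = (S', m')" by (cases q)
  have S: "S \<subseteq> {..<L}" "card S = N" and m: "1 \<le> m" "m \<le> N - 1" using p unfolding T_def pe by auto
  have S': "S' \<subseteq> {..<L}" "card S' = N" and m': "1 \<le> m'" "m' \<le> N - 1" using q unfolding T_def qe by auto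
  have fS: "finite S" using S(1) finite_subset by blast
  have neS: "S \<noteq> {}" using S(2) N by auto
  have y: "lamS S m = lamS S' m'" using eq unfolding Phi_def pe qe by simp
  define y where "y = lamS S m"
  have K: "(\<lambda>j. kf j y) ` S = (\<lambda>j. kf j y) ` S'" using eq unfolding Phi_def pe qe y_def by (simp add: y)
  have sub: "A \<subseteq> B" if "(\<lambda>j. kf j y) ` A = (\<lambda>j. kf j y) ` B" for A B
  proof
    fix j assume "j \<in> A"
    then have "kf j y \<in> (\<lambda>j. kf j y) ` B" using that by blast
    then obtain i where "i \<in> B" "kf j y = kf i y" by auto
    then have "kf j y \<in> Jset i" using kf(1)[of i y] by simp
    then have "j = i" using kf(1)[of j y] Jset_disj by blast
    with \<open>i \<in> B\<close> show "j \<in> B" by simp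
  qed
  have SS: "S = S'" using sub[OF K] sub[OF K[symmetric]] by blast
  have "cS S m = cS S m'"
    using lamS[OF fS neS m(1)] lamS[OF fS neS m'(1)] y S S' m m' N SS unfolding y_def by simp
  then have "m = m'" unfolding cS_def using Lpos by simp
  then show "p = q" using pe qe SS by simp
qed

lemma Sol_in_T: assumes N: "1 \<le> N" and q: "q \<in> Sol N" shows "q \<in> Phi ` T N"
proof -
  obtain K y where qe: "q = (K, y)" by (cases q)
  have fK: "finite K" and cK: "card K = N" and K02: "K \<subseteq> {0..<2*pi}"
    and Kl: "\<forall>k\<in>K. sin (k * real L / 2) \<noteq> 0 \<and> y = Lam k"
    and n: "\<exists>n::int. real L * (\<Sum>k\<in>K. k) = 2 * pi * of_int n"
    using q unfolding qe Sol_iff by blast+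
  have exJ: "\<exists>j. j < L \<and> k \<in> Jset j" if "k \<in> K" for k using in_some_J K02 Kl that by blast
  define idx where "idx k = (SOME j. j < L \<and> k \<in> Jset j)" for k
  have idx: "idx k < L \<and> k \<in> Jset (idx k)" if "k \<in> K" for k
    unfolding idx_def by (rule someI_ex[OF exJ[OF that]])
  have kf_idx: "kf (idx k) y = k" if "k \<in> K" for k
    using kf_unique[of k "idx k" y] idx[OF that] Kl that by simp
  have inj: "inj_on idx K"
    by (rule inj_onI) (metis kf_idx)
  define S where "S = idx ` K"
  have cS': "card S = N" unfolding S_def using card_image[OF inj] cK by simp
  have fS: "finite S" unfolding S_def using fK by simp
  have SL: "S \<subseteq> {..<L}" unfolding S_def using idx by auto
  have neS: "S \<noteq> {}" using cS' N by auto
  have KS: "K = (\<lambda>j. kf j y) ` S" unfolding S_def image_image using kf_idx by simp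
  obtain n :: int where n: "real L * F S y = 2 * pi * of_int n" using n unfolding KS sum_K by blast
  define s where "s = (\<Sum>j\<in>S. j)"
  have Fn: "F S y = 2 * pi * of_int n / real L" using n Lpos by (simp add: field_simps)
  have b1: "2 * pi * real s / real L < 2 * pi * of_int n / real L"
    using F_bounds[OF fS neS, of y] unfolding sum_lo Fn s_def by simp
  have b2: "2 * pi * of_int n / real L < 2 * pi * (real s + real N) / real L"
    using F_bounds[OF fS neS, of y] unfolding sum_lo_Suc Fn s_def cS' by simp
  have "real s < of_int n" using b1 Lpos by (simp add: divide_less_cancel)
  then have i1: "int s < n" by linarith
  have "of_int n < real s + real N" using b2 Lpos by (simp add: divide_less_cancel)
  then have i2: "n < int s + int N" by linarith
  define m where "m = nat (n - int s)"
  have mi: "int m = n - int s" unfolding m_def using i1 by simp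
  have m: "1 \<le> m" "m \<le> N - 1" using mi i1 i2 by linarith+
  have "F S y = cS S m" unfolding Fn cS_def s_def[symmetric]
  proof -
    have "of_int n = real s + real m" using mi by (metis of_int_of_nat_eq of_int_add add_diff_cancel_left' diff_add_cancel)
    then show "2 * pi * of_int n / real L = 2 * pi * (real s + real m) / real L" by simp
  qed
  moreover have "F S (lamS S m) = cS S m" by (rule lamS[OF fS neS m(1)]) (use m cS' N in simp)
  ultimately have yl: "lamS S m = y" using F_inj[OF fS neS] by simp
  have "(S, m) \<in> T N" unfolding T_def using SL cS' m by simp
  moreover have "Phi (S, m) = q" unfolding Phi_def qe KS by (simp add: yl)
  ultimately show ?thesis by (metis image_eqI)
qed

lemma count: assumes N: "1 \<le> N" "N \<le> L"
  shows "finite (Sol N) \<and> card (Sol N) = (L choose N) * (N - 1)"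
proof -
  have eq: "Sol N = Phi ` T N" using T_in_Sol Sol_in_T N(1) by blast
  have fin: "finite {S. S \<subseteq> {..<L} \<and> card S = N}" by simp
  have fT: "finite (T N)" unfolding T_def using fin by (auto intro: finite_SigmaI)
  have "card (T N) = (\<Sum>S\<in>{S. S \<subseteq> {..<L} \<and> card S = N}. card {1..N-1})"
    unfolding T_def using fin by (simp add: card_SigmaI)
  also have "\<dots> = (L choose N) * (N - 1)" using n_subsets[of "{..<L}" N] by simp
  finally have cT: "card (T N) = (L choose N) * (N - 1)" .
  show ?thesis unfolding eq using fT card_image[OF Phi_inj[OF N(1)]] cT by simp
qed

end

theorem proposition1:
  fixes L N :: nat and U phi :: real
  assumes "L \<ge> 2" and "2 \<le> N" and "N \<le> L"
    and "U > 8 / real L"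
    and "0 \<le> phi" and "phi < 2 * pi / real L"
  shows "finite (lw_real_solutions L N U phi) \<and>
         card (lw_real_solutions L N U phi) = (L choose N) * (N - 1)"
proof -
  have Lp: "real L > 0" using assms(1) by simp
  interpret lwc L U phi
  proof
    show "1 \<le> L" using assms(1) by simp
    show "U * real L > 8" using assms(4) Lp by (simp add: divide_less_eq)
  qed
  have "finite (Sol N) \<and> card (Sol N) = (L choose N) * (N - 1)"
    by (rule count) (use assms in simp_all)
  then show ?thesis unfolding Sol_def .
qed

end
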